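(* Let $r\in(0,1)$ and $v\in W^{1,2}_{[0]}(0,1)$. Then for every $\epsilon>0$, $$\|v\|_{L^2(0,1)}^{\frac{3+r}{2}}\le\frac{(3+r)\epsilon}{2}\|v_y\|_{L^2(0,1)}^2+\frac{3+r}{8\epsilon}\|v\|_{L^{1+r}(0,1)}^{1+r}.$$
   Context: $W^{1,2}_{[0]}(0,1):=\{g\in W^{1,2}(0,1): g(0)=0\}$; $v_y$ denotes the weak derivative of $v$; $\|v\|_{L^{1+r}(0,1)}=\left(\int_0^1|v|^{1+r}\mathrm{d}x\right)^{1/(1+r)}$. *)

theory Defs
  imports "HOL-Analysis.Analysis"
begin

definition test_fun01 :: "(real \<Rightarrow> real) \<Rightarrow> bool" where
  "test_fun01 \<phi> \<longleftrightarrow>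
     (\<forall>k. (deriv ^^ k) \<phi> differentiable_on UNIV) \<and>
     (\<exists>a b. 0 < a \<and> a \<le> b \<and> b < 1 \<and> (\<forall>x. x \<notin> {a..b} \<longrightarrow> \<phi> x = 0))"

definition L2_01 :: "(real \<Rightarrow> real) \<Rightarrow> bool" where
  "L2_01 f \<longleftrightarrow> set_integrable lborel {0<..<1} f
                 \<and> set_integrable lborel {0<..<1} (\<lambda>x. (f x)\<^sup>2)"

definition weak_deriv01 :: "(real \<Rightarrow> real) \<Rightarrow> (real \<Rightarrow> real) \<Rightarrow> bool" where
  "weak_deriv01 v w \<longleftrightarrow>
     set_integrable lborel {0<..<1} v \<and> set_integrable lborel {0<..<1} w \<and>
     (\<forall>\<phi>. test_fun01 \<phi> \<longrightarrow>
        (LINT x:{0<..<1}|lborel. v x * deriv \<phi> x) = - (LINT x:{0<..<1}|lborel. w x * \<phi> x))"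

text \<open>W^{1,2}_{[0]}(0,1): v is (the continuous representative on [0,1] of) a W^{1,2}(0,1)
  function with weak derivative w, and v(0) = 0.\<close>
definition W12_0 :: "(real \<Rightarrow> real) \<Rightarrow> (real \<Rightarrow> real) \<Rightarrow> bool" where
  "W12_0 v w \<longleftrightarrow> continuous_on {0..1} v \<and> L2_01 v \<and> L2_01 w \<and> weak_deriv01 v w \<and> v 0 = 0"

definition L2norm01 :: "(real \<Rightarrow> real) \<Rightarrow> real" where
  "L2norm01 f = sqrt (LINT x:{0<..<1}|lborel. (f x)\<^sup>2)"

definition Lpnorm01 :: "real \<Rightarrow> (real \<Rightarrow> real) \<Rightarrow> real" where
  "Lpnorm01 p f = (LINT x:{0<..<1}|lborel. \<bar>f x\<bar> powr p) powr (1 / p)"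

end

theory Submission
  imports Defs "HOL-Computational_Algebra.Polynomial"
begin

definition smooth :: "(real \<Rightarrow> real) \<Rightarrow> bool" where
  "smooth f \<longleftrightarrow> (\<forall>k. (deriv ^^ k) f differentiable_on UNIV)"

lemma smooth_coinduct:
  assumes "P f" and step: "\<And>g. P g \<Longrightarrow> (\<forall>x. g differentiable (at x)) \<and> P (deriv g)"
  shows "smooth f"
proof -
  have "\<forall>g. P g \<longrightarrow> (deriv ^^ k) g differentiable_on UNIV" for k
  proof (induction k)
    case 0
    then show ?case using step by (auto simp: differentiable_on_def)
  next
    case (Suc k)
    show ?case
    proof (intro allI impI)
      fix g assume "P g"
      then have "P (deriv g)" using step by blast
      then have "(deriv ^^ k) (deriv g) differentiable_on UNIV" using Suc by blast
      then show "(deriv ^^ Suc k) g differentiable_on UNIV"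
        by (simp add: funpow_Suc_right del: funpow.simps)
    qed
  qed
  then show ?thesis using assms(1) by (auto simp: smooth_def)
qed

lemma smooth_differentiable: "smooth f \<Longrightarrow> f differentiable (at x)"
  unfolding smooth_def by (metis UNIV_I differentiable_on_def funpow_0 at_within_open open_UNIV)

lemma smooth_deriv: "smooth f \<Longrightarrow> smooth (deriv f)"
  unfolding smooth_def
proof
  fix k assume "\<forall>k. (deriv ^^ k) f differentiable_on UNIV"
  then have "(deriv ^^ Suc k) f differentiable_on UNIV" by blast
  then show "(deriv ^^ k) (deriv f) differentiable_on UNIV"
    by (simp add: funpow_Suc_right del: funpow.simps)
qed

lemma smooth_iff: "smooth f \<longleftrightarrow> (\<forall>x. f differentiable (at x)) \<and> smooth (deriv f)"
  using smooth_differentiable smooth_deriv smooth_coinduct[of "\<lambda>g. g = f \<or> smooth g" f]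
  by (metis (mono_tags, lifting) smooth_coinduct)

lemma smooth_const: "smooth (\<lambda>x. c)"
  by (rule smooth_coinduct[of "\<lambda>g. \<exists>c. g = (\<lambda>x. c)"]) auto

lemma smooth_add: assumes "smooth a" "smooth b" shows "smooth (\<lambda>x. a x + b x)"
proof (rule smooth_coinduct[of "\<lambda>g. \<exists>a b. smooth a \<and> smooth b \<and> g = (\<lambda>x. a x + b x)"])
  fix g assume "\<exists>a b. smooth a \<and> smooth b \<and> g = (\<lambda>x. a x + b x)"
  then obtain a b where ab: "smooth a" "smooth b" "g = (\<lambda>x. a x + b x)" by blast
  have d: "(g has_real_derivative deriv a x + deriv b x) (at x)" for x
    unfolding ab(3) using ab(1,2)
    by (intro derivative_intros) (auto simp: DERIV_deriv_iff_real_differentiable smooth_differentiable)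
  then have "deriv g = (\<lambda>x. deriv a x + deriv b x)" using DERIV_imp_deriv by blast
  then show "(\<forall>x. g differentiable (at x)) \<and> (\<exists>a b. smooth a \<and> smooth b \<and> deriv g = (\<lambda>x. a x + b x))"
    using d ab smooth_deriv real_differentiable_def by blast
qed (use assms in blast)

lemma smooth_affine: assumes "smooth a" shows "smooth (\<lambda>x. k * a (c * x + d))"
proof (rule smooth_coinduct[of "\<lambda>g. \<exists>k a. smooth a \<and> g = (\<lambda>x. k * a (c * x + d))"])
  fix g assume "\<exists>k a. smooth a \<and> g = (\<lambda>x. k * a (c * x + d))"
  then obtain k a where ab: "smooth a" "g = (\<lambda>x. k * a (c * x + d))" by blast
  have d: "(g has_real_derivative (k * c) * deriv a (c * x + d)) (at x)" for x
  proof -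
    have "(a has_real_derivative deriv a (c * x + d)) (at (c * x + d))"
      using ab(1) by (simp add: DERIV_deriv_iff_real_differentiable smooth_differentiable)
    moreover have "((\<lambda>x. c * x + d) has_real_derivative c) (at x)"
      by (auto intro!: derivative_eq_intros)
    ultimately have "((\<lambda>x. a (c * x + d)) has_real_derivative deriv a (c * x + d) * c) (at x)"
      by (rule DERIV_chain2)
    from DERIV_cmult[OF this, of k] show ?thesis unfolding ab(2) by (simp add: ac_simps)
  qed
  then have "deriv g = (\<lambda>x. (k * c) * deriv a (c * x + d))" using DERIV_imp_deriv by blast
  then show "(\<forall>x. g differentiable (at x)) \<and> (\<exists>k a. smooth a \<and> deriv g = (\<lambda>x. k * a (c * x + d)))"
    using d ab smooth_deriv real_differentiable_def by blast
qed (use assms in blast)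

definition SP :: "((real \<Rightarrow> real) \<times> (real \<Rightarrow> real)) list \<Rightarrow> real \<Rightarrow> real" where
  "SP L x = (\<Sum>(a,b)\<leftarrow>L. a x * b x)"

definition dSP :: "((real \<Rightarrow> real) \<times> (real \<Rightarrow> real)) list \<Rightarrow> ((real \<Rightarrow> real) \<times> (real \<Rightarrow> real)) list" where
  "dSP L = concat (map (\<lambda>(a,b). [(deriv a, b), (a, deriv b)]) L)"

lemma SP_deriv:
  assumes "\<forall>(a,b)\<in>set L. smooth a \<and> smooth b"
  shows "(SP L has_real_derivative SP (dSP L) x) (at x)"
  using assms
proof (induction L)
  case Nil
  then show ?case by (simp add: SP_def dSP_def)
next
  case (Cons p L)
  obtain a b where p: "p = (a,b)" by (cases p)
  have sa: "smooth a" "smooth b" using Cons.prems p by auto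
  have "((\<lambda>x. a x * b x + SP L x) has_real_derivative
         (deriv a x * b x + a x * deriv b x) + SP (dSP L) x) (at x)"
  proof (intro DERIV_add)
    show "((\<lambda>x. a x * b x) has_real_derivative deriv a x * b x + a x * deriv b x) (at x)"
      using sa DERIV_mult[of a "deriv a x" x UNIV b "deriv b x"]
      by (auto simp: DERIV_deriv_iff_real_differentiable smooth_differentiable ac_simps)
    show "(SP L has_real_derivative SP (dSP L) x) (at x)" using Cons by auto
  qed
  moreover have "SP (p # L) = (\<lambda>x. a x * b x + SP L x)" by (auto simp: SP_def p)
  moreover have "SP (dSP (p # L)) x = (deriv a x * b x + a x * deriv b x) + SP (dSP L) x"
    by (simp add: SP_def dSP_def p)
  ultimately show ?case by simp
qed

lemma smooth_SP:
  assumes "\<forall>(a,b)\<in>set L. smooth a \<and> smooth b"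
  shows "smooth (SP L)"
proof (rule smooth_coinduct[of "\<lambda>g. \<exists>L. (\<forall>(a,b)\<in>set L. smooth a \<and> smooth b) \<and> g = SP L"])
  fix g assume "\<exists>L. (\<forall>(a,b)\<in>set L. smooth a \<and> smooth b) \<and> g = SP L"
  then obtain L where L: "\<forall>(a,b)\<in>set L. smooth a \<and> smooth b" "g = SP L" by blast
  have "deriv g = SP (dSP L)" using SP_deriv[OF L(1)] L(2) DERIV_imp_deriv by blast
  moreover have "\<forall>(a,b)\<in>set (dSP L). smooth a \<and> smooth b"
    using L(1) smooth_deriv by (fastforce simp: dSP_def)
  ultimately show "(\<forall>x. g differentiable (at x)) \<and> (\<exists>L. (\<forall>(a,b)\<in>set L. smooth a \<and> smooth b) \<and> deriv g = SP L)"
    using SP_deriv[OF L(1)] L(2) real_differentiable_def by blast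
qed (use assms in blast)

lemma smooth_mult: assumes "smooth a" "smooth b" shows "smooth (\<lambda>x. a x * b x)"
proof -
  have "SP [(a,b)] = (\<lambda>x. a x * b x)" by (auto simp: SP_def)
  with smooth_SP[of "[(a,b)]"] assms show ?thesis by auto
qed

definition FP :: "real poly \<Rightarrow> real \<Rightarrow> real" where
  "FP p x = (if 0 < x then poly p (1/x) * exp (-1/x) else 0)"

lemma poly_exp_lim: "((\<lambda>t::real. t ^ k * poly (p::real poly) t * exp (-t)) \<longlongrightarrow> 0) at_top"
proof (induction p arbitrary: k rule: pCons_induct)
  case 0
  then show ?case by simp
next
  case (pCons a p)
  have e: "(\<lambda>t. t ^ k * poly (pCons a p) t * exp (-t)) =
        (\<lambda>t. a * (t ^ k / exp t) + t ^ Suc k * poly p t * exp (-t))"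
    by (auto simp: exp_minus field_simps)
  have "((\<lambda>t. a * (t ^ k / exp t) + t ^ Suc k * poly p t * exp (-t)) \<longlongrightarrow> a * 0 + 0) at_top"
    by (intro tendsto_intros tendsto_power_div_exp_0 pCons.IH)
  then show ?case by (simp only: e) simp
qed

lemma FP_right_lim: "((\<lambda>h. FP p h / h) \<longlongrightarrow> 0) (at_right 0)"
proof -
  have "((\<lambda>h. (\<lambda>t. t ^ 1 * poly p t * exp (-t)) (inverse h)) \<longlongrightarrow> 0) (at_right 0)"
    by (rule filterlim_compose[OF poly_exp_lim filterlim_inverse_at_top_right])
  moreover have "eventually (\<lambda>h. (\<lambda>t. t ^ 1 * poly p t * exp (-t)) (inverse h) = FP p h / h) (at_right 0)"
    by (rule eventually_mono[OF eventually_at_right_less]) (auto simp: FP_def field_simps)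
  ultimately show ?thesis by (rule Lim_transform_eventually)
qed

definition QP :: "real poly \<Rightarrow> real poly" where
  "QP p = [:0,0,1:] * (p - pderiv p)"

lemma FP_deriv: "(FP p has_real_derivative FP (QP p) x) (at x)"
proof (cases "0 < x")
  case True
  have d1: "((\<lambda>y. poly p (1/y)) has_real_derivative poly (pderiv p) (1/x) * (- 1 / x^2)) (at x)"
  proof (rule DERIV_chain2[of "\<lambda>z. poly p z"])
    show "((\<lambda>z. poly p z) has_real_derivative poly (pderiv p) (1/x)) (at (1/x))" by simp
    show "((\<lambda>y. 1 / y) has_real_derivative - 1 / x^2) (at x)"
      using True by (auto intro!: derivative_eq_intros simp: power2_eq_square field_simps)
  qed
  have d2: "((\<lambda>y. exp (-1/y)) has_real_derivative exp (-1/x) * (1 / x^2)) (at x)"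
    using True by (auto intro!: derivative_eq_intros simp: power2_eq_square field_simps)
  have "((\<lambda>y. poly p (1/y) * exp (-1/y)) has_real_derivative
      poly (pderiv p) (1/x) * (- 1 / x^2) * exp (-1/x) + exp (-1/x) * (1 / x^2) * poly p (1/x)) (at x)"
    by (rule DERIV_mult[OF d1 d2])
  moreover have "poly (pderiv p) (1/x) * (- 1 / x^2) * exp (-1/x) + exp (-1/x) * (1 / x^2) * poly p (1/x)
      = FP (QP p) x"
    using True by (simp add: FP_def QP_def algebra_simps power2_eq_square)
  ultimately have "((\<lambda>y. poly p (1/y) * exp (-1/y)) has_real_derivative FP (QP p) x) (at x)" by simp
  then show ?thesis
    by (rule has_field_derivative_transform_within_open[of _ _ _ "{0<..}"]) (use True in \<open>auto simp: FP_def\<close>)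
next
  case False
  show ?thesis
  proof (cases "x < 0")
    case True
    have "((\<lambda>y. 0) has_real_derivative 0) (at x)" by simp
    then have "(FP p has_real_derivative 0) (at x)"
      by (rule has_field_derivative_transform_within_open[of _ _ _ "{..<0}"]) (use True in \<open>auto simp: FP_def\<close>)
    then show ?thesis using True by (simp add: FP_def)
  next
    case False
    with \<open>\<not> 0 < x\<close> have x0: "x = 0" by simp
    have "((\<lambda>h. (FP p (0 + h) - FP p 0) / h) \<longlongrightarrow> 0) (at 0)"
      unfolding filterlim_at_split
    proof
      show "((\<lambda>h. (FP p (0 + h) - FP p 0) / h) \<longlongrightarrow> 0) (at_left 0)"
      proof (rule Lim_transform_eventually[of "\<lambda>h. 0"])
        show "\<forall>\<^sub>F h in at_left 0. 0 = (FP p (0 + h) - FP p 0) / h"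
        proof (rule eventually_mono)
          show "eventually (\<lambda>x. x \<in> {-1<..<0}) (at_left (0::real))"
            by (rule eventually_at_left_real) simp
        qed (auto simp: FP_def)
      qed simp
      show "((\<lambda>h. (FP p (0 + h) - FP p 0) / h) \<longlongrightarrow> 0) (at_right 0)"
        using FP_right_lim[of p] by (simp add: FP_def)
    qed
    then have "(FP p has_real_derivative 0) (at 0)" by (simp add: DERIV_def)
    then show ?thesis using x0 by (simp add: FP_def)
  qed
qed

lemma smooth_FP: "smooth (FP p)"
proof (rule smooth_coinduct[of "\<lambda>g. \<exists>p. g = FP p"])
  fix g assume "\<exists>p. g = FP p"
  then obtain p where g: "g = FP p" by blast
  have "deriv g = FP (QP p)" using FP_deriv DERIV_imp_deriv g by blast
  then show "(\<forall>x. g differentiable (at x)) \<and> (\<exists>p. deriv g = FP p)"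
    using FP_deriv g real_differentiable_def by blast
qed auto

definition bump :: "real \<Rightarrow> real" where
  "bump x = FP 1 x * FP 1 (1 - x)"

lemma FP1: "FP 1 x = (if 0 < x then exp (-1/x) else 0)"
  by (simp add: FP_def)

lemma smooth_bump: "smooth bump"
proof -
  have "smooth (\<lambda>x. 1 * FP 1 ((-1) * x + 1))" by (rule smooth_affine[OF smooth_FP])
  then have "smooth (\<lambda>x. FP 1 (1 - x))" by simp
  then show ?thesis unfolding bump_def[abs_def] by (intro smooth_mult smooth_FP)
qed

lemma bump_cont: "isCont bump x"
  using smooth_differentiable[OF smooth_bump] differentiable_imp_continuous_within by blast

lemma bump_nonneg: "0 \<le> bump x"
  by (simp add: bump_def FP1)

lemma bump_zero: "x \<le> 0 \<or> 1 \<le> x \<Longrightarrow> bump x = 0"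
  by (auto simp: bump_def FP1)

lemma bump_pos: "0 < x \<Longrightarrow> x < 1 \<Longrightarrow> 0 < bump x"
  by (simp add: bump_def FP1)

lemma ex_antider: "\<exists>F. \<forall>x. (F has_real_derivative bump x) (at x)"
proof -
  have "\<exists>F. \<forall>x :: real. (-\<infinity>::ereal) < x \<longrightarrow> x < \<infinity> \<longrightarrow> (F has_vector_derivative bump x) (at x)"
    by (rule einterval_antiderivative) (auto simp: bump_cont)
  then show ?thesis by (auto simp: has_real_derivative_iff_has_vector_derivative)
qed

definition Fa :: "real \<Rightarrow> real" where
  "Fa = (SOME F. \<forall>x. (F has_real_derivative bump x) (at x))"

lemma Fa_deriv: "(Fa has_real_derivative bump x) (at x)"
  using someI_ex[OF ex_antider] unfolding Fa_def by blast

lemma Fa_mono: assumes "a \<le> b" shows "Fa a \<le> Fa b"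
proof (rule DERIV_nonneg_imp_nondecreasing[OF assms])
  fix x show "\<exists>y. DERIV Fa x :> y \<and> y \<ge> 0"
    using Fa_deriv[of x] bump_nonneg[of x] by blast
qed

lemma Fa_const_left: "x \<le> 0 \<Longrightarrow> Fa x = Fa 0"
proof (cases "x = 0")
  case False
  assume "x \<le> 0" with False have "x < 0" by simp
  from MVT2[OF this, of Fa bump] obtain z where "x < z" "z < 0" "Fa 0 - Fa x = (0 - x) * bump z"
    using Fa_deriv by blast
  then show ?thesis using bump_zero[of z] by simp
qed simp

lemma Fa_const_right: "1 \<le> x \<Longrightarrow> Fa x = Fa 1"
proof (cases "x = 1")
  case False
  assume "1 \<le> x" with False have "1 < x" by simp
  from MVT2[OF this, of Fa bump] obtain z where "1 < z" "z < x" "Fa x - Fa 1 = (x - 1) * bump z"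
    using Fa_deriv by blast
  then show ?thesis using bump_zero[of z] by simp
qed simp

lemma Fa_pos: "Fa 0 < Fa 1"
proof -
  have "\<exists>z::real. 0 < z \<and> z < 1 \<and> Fa 1 - Fa 0 = (1 - 0) * bump z"
    by (rule MVT2) (simp_all add: Fa_deriv)
  then obtain z where "0 < z" "z < 1" "Fa 1 - Fa 0 = (1 - 0) * bump z"
    by blast
  then show ?thesis using bump_pos[of z] by simp
qed

definition cst :: real where "cst = Fa 1 - Fa 0"

lemma cst_pos: "0 < cst" using Fa_pos by (simp add: cst_def)

definition ramp :: "real \<Rightarrow> real" where
  "ramp x = (Fa x - Fa 0) / cst"

lemma ramp_deriv: "(ramp has_real_derivative bump x / cst) (at x)"
proof -
  have "((\<lambda>x. (Fa x - Fa 0) / cst) has_real_derivative (bump x - 0) / cst) (at x)"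
    by (intro DERIV_cdivide DERIV_diff Fa_deriv DERIV_const)
  then show ?thesis unfolding ramp_def[abs_def] by simp
qed

lemma ramp_left: "x \<le> 0 \<Longrightarrow> ramp x = 0"
  using Fa_const_left[of x] by (simp add: ramp_def)

lemma ramp_right: "1 \<le> x \<Longrightarrow> ramp x = 1"
  using cst_pos Fa_const_right[of x] by (simp add: ramp_def cst_def)

lemma ramp_mono: "a \<le> b \<Longrightarrow> ramp a \<le> ramp b"
  using Fa_mono cst_pos by (simp add: ramp_def divide_right_mono)

lemma ramp_bounds: "0 \<le> ramp x" "ramp x \<le> 1"
proof -
  have "ramp (min x 0) \<le> ramp x" by (rule ramp_mono) simp
  then show "0 \<le> ramp x" using ramp_left[of "min x 0"] by simp
  have "ramp x \<le> ramp (max x 1)" by (rule ramp_mono) simp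
  then show "ramp x \<le> 1" using ramp_right[of "max x 1"] by simp
qed

lemma deriv_ramp: "deriv ramp = (\<lambda>x. bump x / cst)"
  using ramp_deriv DERIV_imp_deriv by blast

lemma smooth_ramp: "smooth ramp"
proof (subst smooth_iff, intro conjI allI)
  show "ramp differentiable (at x)" for x using ramp_deriv real_differentiable_def by blast
  have "smooth (\<lambda>x. (1/cst) * bump (1 * x + 0))" by (rule smooth_affine[OF smooth_bump])
  then show "smooth (deriv ramp)" by (simp add: deriv_ramp)
qed

definition K :: "real \<Rightarrow> real \<Rightarrow> real \<Rightarrow> real" where
  "K y h x = bump ((x - y) / h) / (cst * h)"

lemma K_cont: "0 < h \<Longrightarrow> isCont (K y h) x"
  unfolding K_def[abs_def] using cst_pos
  by (intro continuous_intros isCont_o2[OF _ bump_cont]) auto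

lemma K_nonneg: "0 < h \<Longrightarrow> 0 \<le> K y h x"
  using bump_nonneg cst_pos by (simp add: K_def)

lemma K_zero: "0 < h \<Longrightarrow> x \<le> y \<or> y + h \<le> x \<Longrightarrow> K y h x = 0"
  using bump_zero[of "(x - y) / h"] by (auto simp: K_def field_simps)

lemma ramp_shift_deriv: "0 < h \<Longrightarrow> ((\<lambda>x. ramp ((x - y) / h)) has_real_derivative K y h x) (at x)"
proof -
  assume h: "0 < h"
  have "((\<lambda>x. (x - y) / h) has_real_derivative 1 / h) (at x)"
    using h by (auto intro!: derivative_eq_intros)
  from DERIV_chain2[OF ramp_deriv this]
  show ?thesis using h by (simp add: K_def field_simps)
qed

lemma K_int1:
  assumes "0 \<le> y" "0 < h" "y + h \<le> 1"
  shows "integral\<^sup>L lborel (\<lambda>x. K y h x * indicator {0..1} x) = 1"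
proof -
  have "integral\<^sup>L lborel (\<lambda>x. indicator {0..1} x *\<^sub>R K y h x) =
        ramp ((1 - y) / h) - ramp ((0 - y) / h)"
  proof (rule integral_FTC_atLeastAtMost)
    show "((\<lambda>x. ramp ((x - y) / h)) has_vector_derivative K y h x) (at x within {0..1})" for x
      using ramp_shift_deriv[OF assms(2), of y x]
      by (simp add: has_real_derivative_iff_has_vector_derivative has_vector_derivative_at_within)
    show "continuous_on {0..1} (K y h)"
      using K_cont[OF assms(2)] continuous_at_imp_continuous_on by blast
  qed simp
  also have "\<dots> = 1"
    using assms by (simp add: ramp_left ramp_right field_simps)
  finally show ?thesis by (simp add: mult.commute)
qed

lemma kernel_est:
  fixes f :: "real \<Rightarrow> real"
  assumes cont: "\<And>x. isCont f x" and y: "0 \<le> y" "0 < h" "y + h \<le> 1"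
    and close: "\<And>x. y \<le> x \<Longrightarrow> x \<le> y + h \<Longrightarrow> \<bar>f x - f y\<bar> \<le> e"
  shows "\<bar>integral\<^sup>L lborel (\<lambda>x. f x * K y h x * indicator {0..1} x) - f y\<bar> \<le> e"
proof -
  have i1: "integrable lborel (\<lambda>x. f x * K y h x * indicator {0..1} x)"
    by (rule borel_integrable_atLeastAtMost) (intro continuous_intros cont K_cont y(2))
  have i2: "integrable lborel (\<lambda>x. K y h x * indicator {0..1} x)"
    by (rule borel_integrable_atLeastAtMost) (intro continuous_intros cont K_cont y(2))
  have "integral\<^sup>L lborel (\<lambda>x. f x * K y h x * indicator {0..1} x) - f y =
        integral\<^sup>L lborel (\<lambda>x. f x * K y h x * indicator {0..1} x) - f y * integral\<^sup>L lborel (\<lambda>x. K y h x * indicator {0..1} x)"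
    using K_int1[OF y] by simp
  also have "\<dots> = integral\<^sup>L lborel (\<lambda>x. (f x - f y) * (K y h x * indicator {0..1} x))"
    using i1 i2 by (simp add: left_diff_distrib mult.assoc)
  finally have eq: "integral\<^sup>L lborel (\<lambda>x. f x * K y h x * indicator {0..1} x) - f y =
     integral\<^sup>L lborel (\<lambda>x. (f x - f y) * (K y h x * indicator {0..1} x))" .
  have "\<bar>integral\<^sup>L lborel (\<lambda>x. (f x - f y) * (K y h x * indicator {0..1} x))\<bar>
        \<le> integral\<^sup>L lborel (\<lambda>x. e * (K y h x * indicator {0..1} x))"
  proof (rule integral_abs_bound_integral)
    show "integrable lborel (\<lambda>x. (f x - f y) * (K y h x * indicator {0..1} x))"
      using i1 i2 by (simp add: left_diff_distrib mult.assoc)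
    show "integrable lborel (\<lambda>x. e * (K y h x * indicator {0..1} x))"
      using i2 by simp
    fix x
    show "\<bar>(f x - f y) * (K y h x * indicator {0..1} x)\<bar> \<le> e * (K y h x * indicator {0..1} x)"
    proof (cases "y \<le> x \<and> x \<le> y + h")
      case True
      then have "\<bar>f x - f y\<bar> \<le> e" using close by blast
      moreover have "0 \<le> K y h x * indicator {0..1} x" using K_nonneg[OF y(2)] by simp
      ultimately show ?thesis by (simp add: abs_mult mult_right_mono K_nonneg[OF y(2)])
    next
      case False
      then have "K y h x = 0" using K_zero[OF y(2)] by force
      then show ?thesis by simp
    qed
  qed
  also have "\<dots> = e" using K_int1[OF y] by simp
  finally show ?thesis using eq by simp
qed

lemma small_int:
  fixes f :: "real \<Rightarrow> real"
  assumes f: "integrable lborel f" and nn: "\<And>x. 0 \<le> f x" and e: "0 < e"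
  shows "\<exists>\<delta>>0. \<forall>h. 0 < h \<longrightarrow> h < \<delta> \<longrightarrow> integral\<^sup>L lborel (\<lambda>x. f x * indicator {a<..a+h} x) \<le> e"
proof -
  define s where "s t x = f x * indicator {a<..a + 1/t} x" for t x
  have meas: "f \<in> borel_measurable lborel" using f by auto
  have "((\<lambda>t. integral\<^sup>L lborel (s t)) \<longlongrightarrow> integral\<^sup>L lborel (\<lambda>x::real. 0::real)) at_top"
  proof (rule integral_dominated_convergence_at_top[where s=s and w=f and f="\<lambda>x::real. 0::real" and M=lborel])
    show "(\<lambda>x. 0::real) \<in> borel_measurable lborel" by simp
    show "s t \<in> borel_measurable lborel" for t unfolding s_def using meas by measurable
    show "integrable lborel f" by fact
    show "AE x in lborel. ((\<lambda>t. s t x) \<longlongrightarrow> 0) at_top"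
    proof (rule AE_I2)
      fix x
      show "((\<lambda>t. s t x) \<longlongrightarrow> 0) at_top"
      proof (cases "a < x")
        case True
        have "eventually (\<lambda>t. s t x = 0) at_top"
          unfolding eventually_at_top_linorder
        proof (intro exI allI impI)
          fix t assume t: "t \<ge> 2 / (x - a)"
          have "0 < 2 / (x - a)" using True by simp
          then have tp: "0 < t" using t by linarith
          have "2 \<le> t * (x - a)" using t True by (simp add: field_simps)
          then have "1 / t < x - a" using tp by (simp add: field_simps)
          then show "s t x = 0" by (simp add: s_def)
        qed
        then have "eventually (\<lambda>t. 0 = s t x) at_top" by (rule eventually_mono) simp
        then show ?thesis by (rule Lim_transform_eventually[OF tendsto_const])
      next
        case False
        then show ?thesis by (simp add: s_def)
      qed
    qed
    show "\<forall>\<^sub>F i in at_top. AE x in lborel. norm (s i x) \<le> f x"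
      by (intro always_eventually allI AE_I2) (simp add: s_def nn abs_mult indicator_def)
  qed
  then have "eventually (\<lambda>t. integral\<^sup>L lborel (s t) < e) at_top"
    using e by (simp add: order_tendstoD(2))
  then obtain T where T: "\<And>t. t \<ge> T \<Longrightarrow> integral\<^sup>L lborel (s t) < e"
    unfolding eventually_at_top_linorder by blast
  define t0 where "t0 = max T 1"
  have t0: "t0 \<ge> T" "0 < t0" by (auto simp: t0_def)
  show ?thesis
  proof (intro exI[of _ "1 / t0"] conjI allI impI)
    show "0 < 1 / t0" using t0 by simp
    fix h assume h: "0 < h" "h < 1 / t0"
    have "integral\<^sup>L lborel (\<lambda>x. f x * indicator {a<..a+h} x) \<le> integral\<^sup>L lborel (s t0)"
    proof (rule integral_mono)
      show "integrable lborel (\<lambda>x. f x * indicator {a<..a+h} x)"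
        by (rule integrable_real_mult_indicator) (use f in auto)
      show "integrable lborel (s t0)" unfolding s_def
        by (rule integrable_real_mult_indicator) (use f in auto)
      fix x show "f x * indicator {a<..a+h} x \<le> s t0 x"
        using h nn[of x] by (auto simp: s_def indicator_def)
    qed
    also have "\<dots> \<le> e" using T[OF t0(1)] by simp
    finally show "integral\<^sup>L lborel (\<lambda>x. f x * indicator {a<..a+h} x) \<le> e" .
  qed
qed

definition PH :: "real \<Rightarrow> real \<Rightarrow> real \<Rightarrow> real \<Rightarrow> real" where
  "PH x0 x1 h x = ramp ((x - x0) / h) - ramp ((x - x1) / h)"

lemma ramp_cont: "isCont ramp x"
  using ramp_deriv DERIV_isCont by blast

lemma PH_cont: "0 < h \<Longrightarrow> isCont (PH x0 x1 h) x"
  unfolding PH_def[abs_def]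
  by (intro continuous_intros isCont_o2[OF _ ramp_cont]) auto

lemma PH_deriv: "0 < h \<Longrightarrow> (PH x0 x1 h has_real_derivative K x0 h x - K x1 h x) (at x)"
  unfolding PH_def[abs_def] by (intro DERIV_diff ramp_shift_deriv)

lemma deriv_PH: "0 < h \<Longrightarrow> deriv (PH x0 x1 h) = (\<lambda>x. K x0 h x - K x1 h x)"
  using PH_deriv DERIV_imp_deriv by blast

lemma smooth_PH: assumes "0 < h" shows "smooth (PH x0 x1 h)"
proof -
  have "smooth (\<lambda>x. 1 * ramp ((1/h) * x + (- x0/h)) + (-1) * ramp ((1/h) * x + (- x1/h)))"
    by (intro smooth_add smooth_affine smooth_ramp)
  moreover have "(\<lambda>x. 1 * ramp ((1/h) * x + (- x0/h)) + (-1) * ramp ((1/h) * x + (- x1/h))) = PH x0 x1 h"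
    by (auto simp: PH_def diff_divide_distrib)
  ultimately show ?thesis by simp
qed

lemma PH_test:
  assumes "0 < x0" "x0 < x1" "0 < h" "x1 + h < 1"
  shows "test_fun01 (PH x0 x1 h)"
  unfolding test_fun01_def
proof
  show "\<forall>k. (deriv ^^ k) (PH x0 x1 h) differentiable_on UNIV"
    using smooth_PH[OF assms(3)] by (simp add: smooth_def)
  show "\<exists>a b. 0 < a \<and> a \<le> b \<and> b < 1 \<and> (\<forall>x. x \<notin> {a..b} \<longrightarrow> PH x0 x1 h x = 0)"
  proof (intro exI conjI allI impI)
    fix x assume "x \<notin> {x0..x1 + h}"
    then consider "x < x0" | "x > x1 + h" by auto
    then show "PH x0 x1 h x = 0"
    proof cases
      case 1
      then have "(x - x0) / h \<le> 0" "(x - x1) / h \<le> 0" using assms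
        by (auto simp: divide_le_0_iff)
      then show ?thesis by (simp add: PH_def ramp_left)
    next
      case 2
      then have "1 \<le> (x - x0) / h" "1 \<le> (x - x1) / h" using assms
        by (auto simp: le_divide_eq)
      then show ?thesis by (simp add: PH_def ramp_right)
    qed
  qed (use assms in auto)
qed

lemma PH_approx:
  assumes h: "0 < h" "x0 + h \<le> x1"
  shows "\<bar>PH x0 x1 h x - indicator {x0<..x1} x\<bar> \<le> indicator {x0<..x0+h} x + indicator {x1<..x1+h} x"
proof -
  have r1: "0 \<le> ramp t" "ramp t \<le> 1" for t using ramp_bounds by auto
  consider "x \<le> x0" | "x0 < x \<and> x \<le> x0 + h" | "x0 + h < x \<and> x \<le> x1" | "x1 < x \<and> x \<le> x1 + h" | "x1 + h < x"
    by linarith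
  then show ?thesis
  proof cases
    case 1
    then have "(x - x0) / h \<le> 0" "(x - x1) / h \<le> 0" using h by (auto simp: divide_le_0_iff)
    then show ?thesis using 1 by (simp add: PH_def ramp_left indicator_def)
  next
    case 2
    then have "(x - x1) / h \<le> 0" using h by (auto simp: divide_le_0_iff)
    then show ?thesis using 2 h r1[of "(x - x0) / h"] by (simp add: PH_def ramp_left indicator_def)
  next
    case 3
    then have "1 \<le> (x - x0) / h" "(x - x1) / h \<le> 0" using h by (auto simp: divide_le_0_iff le_divide_eq)
    then show ?thesis using 3 h by (simp add: PH_def ramp_left ramp_right indicator_def)
  next
    case 4
    then have "1 \<le> (x - x0) / h" using h by (auto simp: le_divide_eq)
    then show ?thesis using 4 h r1[of "(x - x1) / h"] by (simp add: PH_def ramp_right indicator_def)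
  next
    case 5
    then have "1 \<le> (x - x0) / h" "1 \<le> (x - x1) / h" using h by (auto simp: le_divide_eq)
    then show ?thesis using 5 h by (simp add: PH_def ramp_right indicator_def)
  qed
qed

lemma isCont_eps:
  fixes f :: "real \<Rightarrow> real"
  assumes "isCont f a" "0 < e"
  obtains d where "0 < d" "\<And>x. \<bar>x - a\<bar> < d \<Longrightarrow> \<bar>f x - f a\<bar> < e"
proof -
  from assms(1) have "f \<midarrow>a\<rightarrow> f a" by (simp add: isCont_def)
  then obtain d where d: "0 < d" "\<And>x. x \<noteq> a \<and> norm (x - a) < d \<Longrightarrow> norm (f x - f a) < e"
    using assms(2) unfolding LIM_eq by blast
  show ?thesis
  proof (rule that[OF d(1)])
    fix x assume "\<bar>x - a\<bar> < d"
    then show "\<bar>f x - f a\<bar> < e" using d(2)[of x] assms(2) by (cases "x = a") auto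
  qed
qed

lemma PH_abs: "\<bar>PH x0 x1 h x\<bar> \<le> 1"
  using ramp_bounds[of "(x - x0) / h"] ramp_bounds[of "(x - x1) / h"] by (simp add: PH_def)

lemma FTC_weak:
  fixes vb wt :: "real \<Rightarrow> real"
  assumes vc: "\<And>x. isCont vb x" and wi: "integrable lborel wt"
    and ident: "\<And>h. 0 < h \<Longrightarrow> x1 + h < 1 \<Longrightarrow>
      integral\<^sup>L lborel (\<lambda>x. vb x * (K x0 h x - K x1 h x) * indicator {0..1} x)
        = - integral\<^sup>L lborel (\<lambda>x. wt x * PH x0 x1 h x)"
    and x: "0 < x0" "x0 < x1" "x1 < 1"
  shows "vb x1 - vb x0 = integral\<^sup>L lborel (\<lambda>x. wt x * indicator {x0<..x1} x)"
proof -
  define I where "I = integral\<^sup>L lborel (\<lambda>x. wt x * indicator {x0<..x1} x)"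
  have wmeas: "wt \<in> borel_measurable lborel" using wi by auto
  have wai: "integrable lborel (\<lambda>x. \<bar>wt x\<bar>)" using wi by auto
  have main: "\<bar>vb x1 - vb x0 - I\<bar> \<le> 4 * e" if e: "0 < e" for e
  proof -
    obtain d0 where d0: "0 < d0" "\<And>x. \<bar>x - x0\<bar> < d0 \<Longrightarrow> \<bar>vb x - vb x0\<bar> < e"
      using isCont_eps[OF vc e] by blast
    obtain d1 where d1: "0 < d1" "\<And>x. \<bar>x - x1\<bar> < d1 \<Longrightarrow> \<bar>vb x - vb x1\<bar> < e"
      using isCont_eps[OF vc e] by blast
    obtain da where da: "0 < da" "\<And>h. 0 < h \<Longrightarrow> h < da \<Longrightarrow>
        integral\<^sup>L lborel (\<lambda>x. \<bar>wt x\<bar> * indicator {x0<..x0+h} x) \<le> e"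
      using small_int[OF wai _ e, of x0] by auto
    obtain db where db: "0 < db" "\<And>h. 0 < h \<Longrightarrow> h < db \<Longrightarrow>
        integral\<^sup>L lborel (\<lambda>x. \<bar>wt x\<bar> * indicator {x1<..x1+h} x) \<le> e"
      using small_int[OF wai _ e, of x1] by auto
    define h where "h = min (min (d0/2) (d1/2)) (min (min (da/2) (db/2)) (min ((x1-x0)/2) ((1-x1)/2)))"
    have h: "0 < h" "h < d0" "h < d1" "h < da" "h < db" "x0 + h \<le> x1" "x1 + h < 1"
    proof -
      have hl: "h \<le> d0/2" "h \<le> d1/2" "h \<le> da/2" "h \<le> db/2" "h \<le> (x1-x0)/2" "h \<le> (1-x1)/2"
        unfolding h_def by (meson min.cobounded1 min.cobounded2 order_trans)+
      have hp: "0 < h" using d0 d1 da db x by (auto simp: h_def)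
      show "0 < h" "h < d0" "h < d1" "h < da" "h < db"
        using hl hp d0(1) d1(1) da(1) db(1) by linarith+
      show "x0 + h \<le> x1" using hl(5) hp by (simp add: field_simps)
      show "x1 + h < 1" using hl(6) hp x(3) by (simp add: field_simps)
    qed
    define A where "A = integral\<^sup>L lborel (\<lambda>x. vb x * K x0 h x * indicator {0..1} x)"
    define B where "B = integral\<^sup>L lborel (\<lambda>x. vb x * K x1 h x * indicator {0..1} x)"
    define C where "C = integral\<^sup>L lborel (\<lambda>x. wt x * PH x0 x1 h x)"
    have A: "\<bar>A - vb x0\<bar> \<le> e" unfolding A_def
    proof (rule kernel_est[OF vc])
      fix x assume "x0 \<le> x" "x \<le> x0 + h"
      then show "\<bar>vb x - vb x0\<bar> \<le> e" using d0(2)[of x] h by auto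
    qed (use h x in auto)
    have B: "\<bar>B - vb x1\<bar> \<le> e" unfolding B_def
    proof (rule kernel_est[OF vc])
      fix x assume "x1 \<le> x" "x \<le> x1 + h"
      then show "\<bar>vb x - vb x1\<bar> \<le> e" using d1(2)[of x] h by auto
    qed (use h x in auto)
    have iA: "integrable lborel (\<lambda>x. vb x * K x0 h x * indicator {0..1} x)"
      by (rule borel_integrable_atLeastAtMost) (intro continuous_intros vc K_cont h(1))
    have iB: "integrable lborel (\<lambda>x. vb x * K x1 h x * indicator {0..1} x)"
      by (rule borel_integrable_atLeastAtMost) (intro continuous_intros vc K_cont h(1))
    have "integral\<^sup>L lborel (\<lambda>x. vb x * (K x0 h x - K x1 h x) * indicator {0..1} x)
        = integral\<^sup>L lborel (\<lambda>x. vb x * K x0 h x * indicator {0..1} x - vb x * K x1 h x * indicator {0..1} x)"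
      by (simp add: algebra_simps)
    also have "\<dots> = A - B" unfolding A_def B_def by (rule Bochner_Integration.integral_diff[OF iA iB])
    finally have AB: "A - B = - C" using ident[OF h(1) h(7)] by (simp add: C_def)
    have phm: "PH x0 x1 h \<in> borel_measurable lborel"
      using PH_cont[OF h(1)] by (simp add: borel_measurable_continuous_onI continuous_at_imp_continuous_on)
    have iC: "integrable lborel (\<lambda>x. wt x * PH x0 x1 h x)"
    proof (rule Bochner_Integration.integrable_bound[OF wi])
      show "(\<lambda>x. wt x * PH x0 x1 h x) \<in> borel_measurable lborel" using wmeas phm by measurable
      show "AE x in lborel. norm (wt x * PH x0 x1 h x) \<le> norm (wt x)"
        using PH_abs by (intro AE_I2) (simp add: abs_mult mult_left_le)
    qed
    have iI: "integrable lborel (\<lambda>x. wt x * indicator {x0<..x1} x)"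
      by (rule integrable_real_mult_indicator) (use wi in auto)
    have iA2: "integrable lborel (\<lambda>x. \<bar>wt x\<bar> * indicator {x0<..x0+h} x)"
      by (rule integrable_real_mult_indicator) (use wai in auto)
    have iB2: "integrable lborel (\<lambda>x. \<bar>wt x\<bar> * indicator {x1<..x1+h} x)"
      by (rule integrable_real_mult_indicator) (use wai in auto)
    define D where "D = (\<lambda>x. wt x * PH x0 x1 h x - wt x * indicator {x0<..x1} x)"
    define E where "E = (\<lambda>x. \<bar>wt x\<bar> * indicator {x0<..x0+h} x + \<bar>wt x\<bar> * indicator {x1<..x1+h} x)"
    have CD: "C - I = integral\<^sup>L lborel D"
      unfolding C_def I_def D_def by (rule Bochner_Integration.integral_diff[OF iC iI, symmetric])
    have DE: "\<bar>integral\<^sup>L lborel D\<bar> \<le> integral\<^sup>L lborel E"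
    proof (rule integral_abs_bound_integral)
      show "integrable lborel D" unfolding D_def
        by (rule Bochner_Integration.integrable_diff[OF iC iI])
      show "integrable lborel E" unfolding E_def
        by (rule Bochner_Integration.integrable_add[OF iA2 iB2])
      fix x
      have "\<bar>D x\<bar> = \<bar>wt x\<bar> * \<bar>PH x0 x1 h x - indicator {x0<..x1} x\<bar>"
        unfolding D_def by (simp add: abs_mult right_diff_distrib[symmetric])
      also have "\<dots> \<le> \<bar>wt x\<bar> * (indicator {x0<..x0+h} x + indicator {x1<..x1+h} x)"
        by (rule mult_left_mono[OF PH_approx[OF h(1) h(6)]]) simp
      also have "\<dots> = E x" unfolding E_def by (simp add: algebra_simps)
      finally show "\<bar>D x\<bar> \<le> E x" .
    qed
    have "integral\<^sup>L lborel E = integral\<^sup>L lborel (\<lambda>x. \<bar>wt x\<bar> * indicator {x0<..x0+h} x)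
                 + integral\<^sup>L lborel (\<lambda>x. \<bar>wt x\<bar> * indicator {x1<..x1+h} x)"
      unfolding E_def by (rule Bochner_Integration.integral_add[OF iA2 iB2])
    also have "\<dots> \<le> e + e" using da(2)[OF h(1) h(4)] db(2)[OF h(1) h(5)] by simp
    finally have "integral\<^sup>L lborel E \<le> 2 * e" by simp
    with CD DE have CI: "\<bar>C - I\<bar> \<le> 2 * e" by simp
    show ?thesis using A B AB CI by linarith
  qed
  have "vb x1 - vb x0 = I"
  proof (rule ccontr)
    assume "vb x1 - vb x0 \<noteq> I"
    define z where "z = \<bar>vb x1 - vb x0 - I\<bar>"
    have zp: "0 < z" using \<open>vb x1 - vb x0 \<noteq> I\<close> by (simp add: z_def)
    then have p: "0 < z / 8" by simp
    from main[OF p[unfolded z_def]] have "z \<le> 4 * (z / 8)" by (simp add: z_def)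
    then show False using zp by linarith
  qed
  then show ?thesis by (simp add: I_def)
qed

lemma G_est:
  fixes a b p :: real
  assumes p: "0 \<le> p"
  shows "\<bar>b\<bar> powr (p + 1) - \<bar>a\<bar> powr (p + 1)
         \<le> (p + 1) * max (\<bar>a\<bar> powr p) (\<bar>b\<bar> powr p) * \<bar>b - a\<bar>"
proof -
  define \<alpha> where "\<alpha> = \<bar>a\<bar>"
  define \<beta> where "\<beta> = \<bar>b\<bar>"
  have ab: "0 \<le> \<alpha>" "0 \<le> \<beta>" "\<beta> - \<alpha> \<le> \<bar>b - a\<bar>" by (auto simp: \<alpha>_def \<beta>_def)
  have rhs_nn: "0 \<le> (p + 1) * max (\<alpha> powr p) (\<beta> powr p) * \<bar>b - a\<bar>"
    using p by (intro mult_nonneg_nonneg) (auto simp: le_max_iff_disj)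
  have key: "\<beta> powr (p + 1) - \<alpha> powr (p + 1) \<le> (p + 1) * \<beta> powr p * (\<beta> - \<alpha>)" if lt: "\<alpha> < \<beta>"
  proof (cases "\<alpha> = 0")
    case True
    have "\<beta> powr (p + 1) = \<beta> powr p * \<beta>" using ab by (simp add: powr_add)
    moreover have "1 * (\<beta> powr p * \<beta>) \<le> (p + 1) * (\<beta> powr p * \<beta>)"
      using p ab by (intro mult_right_mono) auto
    ultimately show ?thesis using True p by (simp add: mult_ac)
  next
    case False
    then have a0: "0 < \<alpha>" using ab by simp
    have "\<exists>z. \<alpha> < z \<and> z < \<beta> \<and> \<beta> powr (p + 1) - \<alpha> powr (p + 1) = (\<beta> - \<alpha>) * ((p + 1) * z powr (p + 1 - 1))"
    proof (rule MVT2[OF lt])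
      fix x assume "\<alpha> \<le> x" "x \<le> \<beta>"
      then have "0 < x" using a0 by simp
      then show "((\<lambda>s. s powr (p + 1)) has_real_derivative (p + 1) * x powr (p + 1 - 1)) (at x)"
        by (rule has_real_derivative_powr)
    qed
    then obtain z where z: "\<alpha> < z" "z < \<beta>"
      "\<beta> powr (p + 1) - \<alpha> powr (p + 1) = (\<beta> - \<alpha>) * ((p + 1) * z powr p)" by auto
    have "z powr p \<le> \<beta> powr p" using z a0 p by (intro powr_mono2) auto
    then have "(\<beta> - \<alpha>) * ((p + 1) * z powr p) \<le> (\<beta> - \<alpha>) * ((p + 1) * \<beta> powr p)"
      using lt p by (intro mult_left_mono) auto
    then show ?thesis using z(3) by (simp add: mult_ac)
  qed
  show ?thesis
  proof (cases "\<alpha> < \<beta>")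
    case True
    have "\<beta> powr (p + 1) - \<alpha> powr (p + 1) \<le> (p + 1) * \<beta> powr p * (\<beta> - \<alpha>)" by (rule key[OF True])
    also have "\<dots> \<le> (p + 1) * max (\<alpha> powr p) (\<beta> powr p) * \<bar>b - a\<bar>"
      using ab p True by (intro mult_mono) (auto simp: le_max_iff_disj)
    finally show ?thesis by (simp add: \<alpha>_def \<beta>_def)
  next
    case False
    then have "\<beta> powr (p + 1) \<le> \<alpha> powr (p + 1)" using ab p by (intro powr_mono2) auto
    then show ?thesis using rhs_nn by (simp add: \<alpha>_def \<beta>_def)
  qed
qed

lemma u_cont:
  fixes vb :: "real \<Rightarrow> real"
  assumes "\<And>x. isCont vb x" "0 < p"
  shows "isCont (\<lambda>x. \<bar>vb x\<bar> powr p) x"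
  unfolding isCont_def
  by (rule tendsto_powr') (use assms in \<open>auto intro!: tendsto_intros simp: isCont_def[symmetric]\<close>)

lemma int_cw:
  fixes wt c :: "real \<Rightarrow> real"
  assumes wi: "integrable lborel wt" and cc: "\<And>x. isCont c x" and cb: "\<And>x. \<bar>c x\<bar> \<le> Cb"
    and S: "S \<in> sets borel"
  shows "integrable lborel (\<lambda>\<xi>. c \<xi> * \<bar>wt \<xi>\<bar> * indicator S \<xi>)"
proof (rule Bochner_Integration.integrable_bound[of lborel "\<lambda>\<xi>. Cb * \<bar>wt \<xi>\<bar>"])
  show "integrable lborel (\<lambda>\<xi>. Cb * \<bar>wt \<xi>\<bar>)" using wi by auto
  have cm: "c \<in> borel_measurable borel"
    using cc by (simp add: borel_measurable_continuous_onI continuous_at_imp_continuous_on)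
  have wm: "wt \<in> borel_measurable lborel" using wi by auto
  show "(\<lambda>\<xi>. c \<xi> * \<bar>wt \<xi>\<bar> * indicator S \<xi>) \<in> borel_measurable lborel"
    using cm wm S by measurable
  show "AE x in lborel. norm (c x * \<bar>wt x\<bar> * indicator S x) \<le> norm (Cb * \<bar>wt x\<bar>)"
  proof (rule AE_I2)
    fix x
    have "\<bar>c x\<bar> * \<bar>wt x\<bar> * indicator S x \<le> Cb * \<bar>wt x\<bar> * 1"
      using cb[of x] by (intro mult_mono) (auto simp: indicator_def)
    moreover have "0 \<le> Cb" using cb[of x] by linarith
    ultimately show "norm (c x * \<bar>wt x\<bar> * indicator S x) \<le> norm (Cb * \<bar>wt x\<bar>)"
      by (simp add: abs_mult)
  qed
qed

lemma int_cw':
  fixes wt c :: "real \<Rightarrow> real"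
  assumes wi: "integrable lborel wt" and cc: "\<And>x. isCont c x" and cb: "\<And>x. \<bar>c x\<bar> \<le> Cb"
  shows "integrable lborel (\<lambda>\<xi>. c \<xi> * \<bar>wt \<xi>\<bar>)"
  using int_cw[OF assms, of UNIV] by simp

lemma step_est:
  fixes vb wt :: "real \<Rightarrow> real"
  assumes vc: "\<And>x. isCont vb x" and wi: "integrable lborel wt"
    and ftc: "vb t - vb s = integral\<^sup>L lborel (\<lambda>x. wt x * indicator {s<..t} x)"
    and bd: "\<And>x. \<bar>vb x\<bar> \<le> M" and p: "0 < p" and om: "0 \<le> \<omega>"
    and close: "\<And>\<xi>. s < \<xi> \<Longrightarrow> \<xi> \<le> t \<Longrightarrow>
        \<bar>vb s\<bar> powr p \<le> \<bar>vb \<xi>\<bar> powr p + \<omega> \<and> \<bar>vb t\<bar> powr p \<le> \<bar>vb \<xi>\<bar> powr p + \<omega>"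
  shows "\<bar>vb t\<bar> powr (p + 1) - \<bar>vb s\<bar> powr (p + 1)
         \<le> (p + 1) * integral\<^sup>L lborel (\<lambda>\<xi>. (\<bar>vb \<xi>\<bar> powr p + \<omega>) * \<bar>wt \<xi>\<bar> * indicator {s<..t} \<xi>)"
proof -
  define m where "m = max (\<bar>vb s\<bar> powr p) (\<bar>vb t\<bar> powr p)"
  have m0: "0 \<le> m" by (simp add: m_def le_max_iff_disj)
  have iw: "integrable lborel (\<lambda>x. \<bar>wt x\<bar> * indicator {s<..t} x)"
    by (rule integrable_real_mult_indicator) (use wi in auto)
  have iw2: "integrable lborel (\<lambda>x. wt x * indicator {s<..t} x)"
    by (rule integrable_real_mult_indicator) (use wi in auto)
  have ucb: "\<bar>\<bar>vb x\<bar> powr p + \<omega>\<bar> \<le> M powr p + \<omega>" for x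
  proof -
    have "\<bar>vb x\<bar> powr p \<le> M powr p" using bd[of x] p by (intro powr_mono2) auto
    then show ?thesis using om by simp
  qed
  have iu: "integrable lborel (\<lambda>\<xi>. (\<bar>vb \<xi>\<bar> powr p + \<omega>) * \<bar>wt \<xi>\<bar> * indicator {s<..t} \<xi>)"
    by (rule int_cw[OF wi _ ucb]) (auto intro!: continuous_intros u_cont vc p)
  have d1: "\<bar>vb t\<bar> powr (p + 1) - \<bar>vb s\<bar> powr (p + 1) \<le> (p + 1) * m * \<bar>vb t - vb s\<bar>"
    unfolding m_def using G_est[where a="vb s" and b="vb t" and p=p] p by simp
  have "\<bar>vb t - vb s\<bar> \<le> integral\<^sup>L lborel (\<lambda>x. \<bar>wt x\<bar> * indicator {s<..t} x)"
    unfolding ftc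
    by (rule integral_abs_bound_integral[OF iw2 iw]) (simp add: abs_mult)
  then have "m * \<bar>vb t - vb s\<bar> \<le> m * integral\<^sup>L lborel (\<lambda>x. \<bar>wt x\<bar> * indicator {s<..t} x)"
    using m0 by (rule mult_left_mono)
  also have "\<dots> = integral\<^sup>L lborel (\<lambda>x. m * (\<bar>wt x\<bar> * indicator {s<..t} x))"
    by simp
  also have "\<dots> \<le> integral\<^sup>L lborel (\<lambda>\<xi>. (\<bar>vb \<xi>\<bar> powr p + \<omega>) * \<bar>wt \<xi>\<bar> * indicator {s<..t} \<xi>)"
  proof (rule integral_mono)
    show "integrable lborel (\<lambda>x. m * (\<bar>wt x\<bar> * indicator {s<..t} x))" using iw by simp
    show "integrable lborel (\<lambda>\<xi>. (\<bar>vb \<xi>\<bar> powr p + \<omega>) * \<bar>wt \<xi>\<bar> * indicator {s<..t} \<xi>)" by (rule iu)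
    fix \<xi>
    show "m * (\<bar>wt \<xi>\<bar> * indicator {s<..t} \<xi>) \<le> (\<bar>vb \<xi>\<bar> powr p + \<omega>) * \<bar>wt \<xi>\<bar> * indicator {s<..t} \<xi>"
    proof (cases "s < \<xi> \<and> \<xi> \<le> t")
      case True
      then have "m \<le> \<bar>vb \<xi>\<bar> powr p + \<omega>" using close[of \<xi>] by (auto simp: m_def)
      then show ?thesis using True by (simp add: mult_right_mono)
    next
      case False
      then have "indicator {s<..t} \<xi> = (0::real)" by (simp add: indicator_def)
      then show ?thesis by simp
    qed
  qed
  finally have "m * \<bar>vb t - vb s\<bar> \<le> integral\<^sup>L lborel (\<lambda>\<xi>. (\<bar>vb \<xi>\<bar> powr p + \<omega>) * \<bar>wt \<xi>\<bar> * indicator {s<..t} \<xi>)" .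
  then have "(p + 1) * (m * \<bar>vb t - vb s\<bar>) \<le> (p + 1) * integral\<^sup>L lborel (\<lambda>\<xi>. (\<bar>vb \<xi>\<bar> powr p + \<omega>) * \<bar>wt \<xi>\<bar> * indicator {s<..t} \<xi>)"
    using p by (intro mult_left_mono) auto
  with d1 show ?thesis by (simp add: mult.assoc)
qed

lemma chain_claim1:
  fixes vb wt :: "real \<Rightarrow> real"
  assumes vc: "\<And>x. isCont vb x" and wi: "integrable lborel wt"
    and ftc: "\<And>s t. 0 < s \<Longrightarrow> s < t \<Longrightarrow> t < 1 \<Longrightarrow>
               vb t - vb s = integral\<^sup>L lborel (\<lambda>x. wt x * indicator {s<..t} x)"
    and bd: "\<And>x. \<bar>vb x\<bar> \<le> M" and p: "0 < p"
    and x: "0 < x0" "x0 < x" "x < 1" and om: "0 < \<omega>"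
  shows "\<bar>vb x\<bar> powr (p + 1) \<le> \<bar>vb x0\<bar> powr (p + 1)
     + (p + 1) * integral\<^sup>L lborel (\<lambda>\<xi>. \<bar>vb \<xi>\<bar> powr p * \<bar>wt \<xi>\<bar>)
     + (p + 1) * \<omega> * integral\<^sup>L lborel (\<lambda>\<xi>. \<bar>wt \<xi>\<bar>)"
proof -
  define u where "u \<xi> = \<bar>vb \<xi>\<bar> powr p" for \<xi>
  define q where "q = p + 1"
  have uc: "isCont u \<xi>" for \<xi> unfolding u_def[abs_def] by (rule u_cont[OF vc p])
  have ucb: "\<bar>u \<xi> + \<omega>\<bar> \<le> M powr p + \<omega>" for \<xi>
  proof -
    have "u \<xi> \<le> M powr p" using bd[of \<xi>] p by (auto simp: u_def intro!: powr_mono2)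
    moreover have "0 \<le> u \<xi>" by (simp add: u_def)
    ultimately show ?thesis using om by simp
  qed
  have ucb2: "\<bar>u \<xi>\<bar> \<le> M powr p" for \<xi>
    using bd[of \<xi>] p by (auto simp: u_def intro!: powr_mono2)
  have "uniformly_continuous_on {0..1} u"
    by (rule compact_uniformly_continuous) (auto intro!: continuous_at_imp_continuous_on uc)
  then obtain \<delta> where \<delta>: "0 < \<delta>" "\<And>a b. a \<in> {0..1} \<Longrightarrow> b \<in> {0..1} \<Longrightarrow> dist b a < \<delta> \<Longrightarrow> dist (u b) (u a) < \<omega>"
    unfolding uniformly_continuous_on_def using om by metis
  obtain n :: nat where n: "(x - x0) / \<delta> < real n" using reals_Archimedean2 by blast
  have n0: "0 < n" using n x \<delta>(1) by (cases n) (auto simp: divide_less_0_iff)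
  have stepsz: "(x - x0) / real n < \<delta>" using n n0 \<delta>(1) by (simp add: field_simps)
  define T where "T i = x0 + (x - x0) * real i / real n" for i
  define Z where "Z t = integral\<^sup>L lborel (\<lambda>\<xi>. (u \<xi> + \<omega>) * \<bar>wt \<xi>\<bar> * indicator {x0<..t} \<xi>)" for t
  define \<Psi> where "\<Psi> t = \<bar>vb t\<bar> powr q - q * Z t" for t
  have iZ: "integrable lborel (\<lambda>\<xi>. (u \<xi> + \<omega>) * \<bar>wt \<xi>\<bar> * indicator S \<xi>)" if "S \<in> sets borel" for S
    by (rule int_cw[OF wi _ ucb that]) (auto intro!: continuous_intros uc)
  have T0: "T 0 = x0" and Tn: "T n = x" using n0 by (auto simp: T_def)
  have Tmono: "T i \<le> T j" if "i \<le> j" for i j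
    using that x n0 by (auto simp: T_def divide_right_mono mult_left_mono)
  have Tle: "T i \<le> x" if "i \<le> n" for i using Tmono[OF that] Tn by simp
  have Tge: "x0 \<le> T i" for i using Tmono[of 0 i] T0 by simp
  have Tstep: "T (Suc i) - T i = (x - x0) / real n" for i
    using n0 by (simp add: T_def field_simps)
  have step: "\<Psi> (T (Suc i)) \<le> \<Psi> (T i)" if i: "i < n" for i
  proof -
    define s where "s = T i"
    define t where "t = T (Suc i)"
    have st: "0 < s" "s < t" "t < 1" "t - s < \<delta>" "x0 \<le> s" "t \<le> x"
    proof -
      show "x0 \<le> s" using Tge by (simp add: s_def)
      then show "0 < s" using x by simp
      have "0 < (x - x0) / real n" using x n0 by simp
      then show "s < t" using Tstep[of i] by (simp add: s_def t_def)
      show "t \<le> x" using Tle[of "Suc i"] i by (simp add: t_def)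
      then show "t < 1" using x by simp
      show "t - s < \<delta>" using Tstep[of i] stepsz by (simp add: s_def t_def)
    qed
    have close: "\<bar>vb s\<bar> powr p \<le> \<bar>vb \<xi>\<bar> powr p + \<omega> \<and> \<bar>vb t\<bar> powr p \<le> \<bar>vb \<xi>\<bar> powr p + \<omega>"
      if "s < \<xi>" "\<xi> \<le> t" for \<xi>
    proof -
      have in01: "s \<in> {0..1}" "t \<in> {0..1}" "\<xi> \<in> {0..1}" using st that by auto
      have "dist \<xi> s < \<delta>" "dist \<xi> t < \<delta>" using st that by (auto simp: dist_real_def)
      then have "dist (u \<xi>) (u s) < \<omega>" "dist (u \<xi>) (u t) < \<omega>"
        using \<delta>(2)[OF in01(1) in01(3)] \<delta>(2)[OF in01(2) in01(3)] by auto
      then show ?thesis by (auto simp: u_def dist_real_def)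
    qed
    have est: "\<bar>vb t\<bar> powr (p + 1) - \<bar>vb s\<bar> powr (p + 1)
         \<le> (p + 1) * integral\<^sup>L lborel (\<lambda>\<xi>. (\<bar>vb \<xi>\<bar> powr p + \<omega>) * \<bar>wt \<xi>\<bar> * indicator {s<..t} \<xi>)"
      by (rule step_est[OF vc wi ftc[OF st(1,2,3)] bd p _ close]) (use om in auto)
    have "Z t = integral\<^sup>L lborel (\<lambda>\<xi>. (u \<xi> + \<omega>) * \<bar>wt \<xi>\<bar> * indicator {x0<..s} \<xi>
                 + (u \<xi> + \<omega>) * \<bar>wt \<xi>\<bar> * indicator {s<..t} \<xi>)"
      unfolding Z_def
    proof (rule Bochner_Integration.integral_cong[OF refl])
      fix \<xi>
      show "(u \<xi> + \<omega>) * \<bar>wt \<xi>\<bar> * indicator {x0<..t} \<xi> =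
            (u \<xi> + \<omega>) * \<bar>wt \<xi>\<bar> * indicator {x0<..s} \<xi> + (u \<xi> + \<omega>) * \<bar>wt \<xi>\<bar> * indicator {s<..t} \<xi>"
        using st by (auto simp: indicator_def)
    qed
    also have "\<dots> = Z s + integral\<^sup>L lborel (\<lambda>\<xi>. (u \<xi> + \<omega>) * \<bar>wt \<xi>\<bar> * indicator {s<..t} \<xi>)"
      unfolding Z_def by (rule Bochner_Integration.integral_add[OF iZ iZ]) auto
    finally have Zst: "Z t = Z s + integral\<^sup>L lborel (\<lambda>\<xi>. (u \<xi> + \<omega>) * \<bar>wt \<xi>\<bar> * indicator {s<..t} \<xi>)" .
    have "\<Psi> t \<le> \<Psi> s"
      using est Zst unfolding \<Psi>_def q_def u_def by (simp add: algebra_simps)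
    then show ?thesis by (simp add: s_def t_def)
  qed
  have "(\<Sum>i<n. \<Psi> (T (Suc i)) - \<Psi> (T i)) \<le> 0"
    by (rule sum_nonpos) (use step in auto)
  moreover have "(\<Sum>i<n. \<Psi> (T (Suc i)) - \<Psi> (T i)) = \<Psi> (T n) - \<Psi> (T 0)"
    by (rule sum_lessThan_telescope[where f="\<lambda>i. \<Psi> (T i)"])
  ultimately have "\<Psi> (T n) \<le> \<Psi> (T 0)" by simp
  then have P: "\<Psi> x \<le> \<Psi> x0" by (simp add: T0 Tn)
  have Z0: "Z x0 = 0" by (simp add: Z_def)
  have iU: "integrable lborel (\<lambda>\<xi>. (u \<xi> + \<omega>) * \<bar>wt \<xi>\<bar>)"
    using iZ[of UNIV] by simp
  have "Z x \<le> integral\<^sup>L lborel (\<lambda>\<xi>. (u \<xi> + \<omega>) * \<bar>wt \<xi>\<bar>)"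
    unfolding Z_def
  proof (rule integral_mono[OF iZ iU])
    fix \<xi>
    have "0 \<le> (u \<xi> + \<omega>) * \<bar>wt \<xi>\<bar>" using om by (simp add: u_def)
    then show "(u \<xi> + \<omega>) * \<bar>wt \<xi>\<bar> * indicator {x0<..x} \<xi> \<le> (u \<xi> + \<omega>) * \<bar>wt \<xi>\<bar>"
      by (auto simp: indicator_def)
  qed simp
  also have "\<dots> = integral\<^sup>L lborel (\<lambda>\<xi>. u \<xi> * \<bar>wt \<xi>\<bar> + \<omega> * \<bar>wt \<xi>\<bar>)"
    by (simp add: algebra_simps)
  also have "\<dots> = integral\<^sup>L lborel (\<lambda>\<xi>. u \<xi> * \<bar>wt \<xi>\<bar>) + \<omega> * integral\<^sup>L lborel (\<lambda>\<xi>. \<bar>wt \<xi>\<bar>)"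
  proof -
    have i1: "integrable lborel (\<lambda>\<xi>. u \<xi> * \<bar>wt \<xi>\<bar>)" by (rule int_cw'[OF wi uc ucb2])
    have i2: "integrable lborel (\<lambda>\<xi>. \<omega> * \<bar>wt \<xi>\<bar>)" using wi by auto
    show ?thesis using Bochner_Integration.integral_add[OF i1 i2] by simp
  qed
  finally have Zx: "Z x \<le> integral\<^sup>L lborel (\<lambda>\<xi>. u \<xi> * \<bar>wt \<xi>\<bar>) + \<omega> * integral\<^sup>L lborel (\<lambda>\<xi>. \<bar>wt \<xi>\<bar>)" .
  have "\<bar>vb x\<bar> powr q \<le> \<bar>vb x0\<bar> powr q + q * Z x" using P Z0 by (simp add: \<Psi>_def)
  also have "\<dots> \<le> \<bar>vb x0\<bar> powr q + q * (integral\<^sup>L lborel (\<lambda>\<xi>. u \<xi> * \<bar>wt \<xi>\<bar>) + \<omega> * integral\<^sup>L lborel (\<lambda>\<xi>. \<bar>wt \<xi>\<bar>))"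
    using Zx p by (simp add: q_def)
  finally show ?thesis by (simp add: q_def u_def algebra_simps)
qed

lemma small_powr:
  fixes y p :: real
  assumes "0 \<le> y" "y \<le> 1" "0 \<le> p"
  shows "y powr (p + 1) \<le> y"
proof -
  have "y powr (p + 1) = y powr p * y" using assms by (simp add: powr_add)
  also have "\<dots> \<le> 1 * y" using assms by (intro mult_right_mono powr_le1) auto
  finally show ?thesis by simp
qed

lemma chain_final:
  fixes vb wt :: "real \<Rightarrow> real"
  assumes vc: "\<And>x. isCont vb x" and wi: "integrable lborel wt"
    and ftc: "\<And>s t. 0 < s \<Longrightarrow> s < t \<Longrightarrow> t < 1 \<Longrightarrow>
               vb t - vb s = integral\<^sup>L lborel (\<lambda>x. wt x * indicator {s<..t} x)"
    and bd: "\<And>x. \<bar>vb x\<bar> \<le> M" and p: "0 < p" and v0: "vb 0 = 0"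
    and x: "0 < x" "x < 1"
  shows "\<bar>vb x\<bar> powr (p + 1) \<le> (p + 1) * integral\<^sup>L lborel (\<lambda>\<xi>. \<bar>vb \<xi>\<bar> powr p * \<bar>wt \<xi>\<bar>)"
proof (rule field_le_epsilon)
  fix e :: real assume e: "0 < e"
  define q where "q = p + 1"
  define Wn where "Wn = integral\<^sup>L lborel (\<lambda>\<xi>. \<bar>wt \<xi>\<bar>)"
  have Wn0: "0 \<le> Wn" unfolding Wn_def by simp
  have q0: "0 < q" using p by (simp add: q_def)
  define \<omega> where "\<omega> = e / (2 * (q * Wn + 1))"
  have qW: "0 \<le> q * Wn" using q0 Wn0 by simp
  have om: "0 < \<omega>" using e qW by (simp add: \<omega>_def)
  have "q * \<omega> * Wn = (e / 2) * (q * Wn / (q * Wn + 1))" using qW by (simp add: \<omega>_def field_simps)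
  also have "\<dots> \<le> (e / 2) * 1" using e qW by (intro mult_left_mono) auto
  finally have omW: "q * \<omega> * Wn \<le> e / 2" by simp
  obtain d where d: "0 < d" "\<And>y. \<bar>y - 0\<bar> < d \<Longrightarrow> \<bar>vb y - vb 0\<bar> < min (e/2) 1"
    using isCont_eps[OF vc, of "min (e/2) 1" 0] e by auto
  define x0 where "x0 = min (d/2) (x/2)"
  have x0: "0 < x0" "x0 < x" "\<bar>x0 - 0\<bar> < d" using d x by (auto simp: x0_def)
  have vx0: "\<bar>vb x0\<bar> < min (e/2) 1" using d(2)[OF x0(3)] v0 by simp
  have "\<bar>vb x0\<bar> powr (p + 1) \<le> \<bar>vb x0\<bar>" using vx0 p by (intro small_powr) auto
  then have g0: "\<bar>vb x0\<bar> powr (p + 1) \<le> e / 2" using vx0 by simp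
  have "\<bar>vb x\<bar> powr (p + 1) \<le> \<bar>vb x0\<bar> powr (p + 1)
     + (p + 1) * integral\<^sup>L lborel (\<lambda>\<xi>. \<bar>vb \<xi>\<bar> powr p * \<bar>wt \<xi>\<bar>)
     + (p + 1) * \<omega> * integral\<^sup>L lborel (\<lambda>\<xi>. \<bar>wt \<xi>\<bar>)"
    by (rule chain_claim1[OF vc wi ftc bd p x0(1,2) x(2) om])
  then show "\<bar>vb x\<bar> powr (p + 1) \<le> (p + 1) * integral\<^sup>L lborel (\<lambda>\<xi>. \<bar>vb \<xi>\<bar> powr p * \<bar>wt \<xi>\<bar>) + e"
    using g0 omW by (simp add: q_def Wn_def)
qed

theorem corollary1:
  fixes r \<epsilon> :: real and v v_y :: "real \<Rightarrow> real"
  assumes "0 < r" and "r < 1"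
    and "W12_0 v v_y"
    and "0 < \<epsilon>"
  shows "L2norm01 v powr ((3 + r) / 2)
           \<le> (3 + r) * \<epsilon> / 2 * (L2norm01 v_y)\<^sup>2
              + (3 + r) / (8 * \<epsilon>) * (Lpnorm01 (1 + r) v) powr (1 + r)"
proof -
  note W = assms(3)[unfolded W12_0_def]
  have vcont: "continuous_on {0..1} v" and L2v: "L2_01 v" and L2w: "L2_01 v_y"
    and wd: "weak_deriv01 v v_y" and v0: "v 0 = 0" using W by auto
  define vb where "vb x = v (max 0 (min 1 x))" for x
  define wt where "wt x = indicator {0<..<1} x * v_y x" for x
  define p where "p = (1 + r) / 2"
  have p0: "0 < p" using assms(1) by (simp add: p_def)
  have vbv: "vb x = v x" if "0 \<le> x" "x \<le> 1" for x using that by (simp add: vb_def)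
  have vbc: "isCont vb x" for x
  proof -
    have "continuous_on UNIV (\<lambda>x. v (max 0 (min 1 x)))"
      by (rule continuous_on_compose2[OF vcont]) (auto intro!: continuous_intros)
    then show ?thesis unfolding vb_def[abs_def] by (simp add: continuous_on_eq_continuous_at)
  qed
  obtain M where M: "\<And>x. \<bar>vb x\<bar> \<le> M"
  proof -
    have "compact (v ` {0..1})" by (rule compact_continuous_image[OF vcont]) simp
    then have "bounded (v ` {0..1})" by (rule compact_imp_bounded)
    then obtain M where "\<forall>y\<in>v ` {0..1}. norm y \<le> M" unfolding bounded_iff by blast
    then have "\<bar>vb x\<bar> \<le> M" for x by (auto simp: vb_def)
    then show ?thesis using that by blast
  qed
  have wi: "integrable lborel wt"
    using wd unfolding weak_deriv01_def set_integrable_def wt_def by simp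
  have wt0: "wt x = 0" if "x \<notin> {0<..<1}" for x using that by (simp add: wt_def)
  have ftc: "vb t - vb s = integral\<^sup>L lborel (\<lambda>x. wt x * indicator {s<..t} x)"
    if st: "0 < s" "s < t" "t < 1" for s t
  proof (rule FTC_weak[OF vbc wi _ st])
    fix h :: real assume h: "0 < h" "t + h < 1"
    have tf: "test_fun01 (PH s t h)" by (rule PH_test) (use st h in auto)
    with wd have eq: "(LINT x:{0<..<1}|lborel. v x * deriv (PH s t h) x) =
        - (LINT x:{0<..<1}|lborel. v_y x * PH s t h x)"
      unfolding weak_deriv01_def by blast
    have "(LINT x:{0<..<1}|lborel. v x * deriv (PH s t h) x) =
          integral\<^sup>L lborel (\<lambda>x. vb x * (K s h x - K t h x) * indicator {0..1} x)"
      unfolding set_lebesgue_integral_def deriv_PH[OF h(1)]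
    proof (rule Bochner_Integration.integral_cong[OF refl])
      fix x
      show "indicator {0<..<1} x *\<^sub>R (v x * (K s h x - K t h x)) = vb x * (K s h x - K t h x) * indicator {0..1} x"
      proof (cases "0 < x \<and> x < 1")
        case True
        then show ?thesis by (simp add: vbv indicator_def)
      next
        case False
        then have "x \<le> s \<or> s + h \<le> x" "x \<le> t \<or> t + h \<le> x" using st h by auto
        then have "K s h x = 0" "K t h x = 0" using K_zero[OF h(1)] by auto
        then show ?thesis by simp
      qed
    qed
    moreover have "(LINT x:{0<..<1}|lborel. v_y x * PH s t h x) = integral\<^sup>L lborel (\<lambda>x. wt x * PH s t h x)"
      unfolding set_lebesgue_integral_def wt_def by (simp add: mult_ac)
    ultimately show "integral\<^sup>L lborel (\<lambda>x. vb x * (K s h x - K t h x) * indicator {0..1} x) =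
        - integral\<^sup>L lborel (\<lambda>x. wt x * PH s t h x)" using eq by simp
  qed
  define Q where "Q = integral\<^sup>L lborel (\<lambda>\<xi>. \<bar>vb \<xi>\<bar> powr p * \<bar>wt \<xi>\<bar>)"
  have chain: "\<bar>vb x\<bar> powr (p + 1) \<le> (p + 1) * Q" if "0 < x" "x < 1" for x
    unfolding Q_def by (rule chain_final[OF vbc wi ftc M p0 _ that]) (simp_all add: vbv v0)
  define B2 where "B2 = integral\<^sup>L lborel (\<lambda>x. (wt x)\<^sup>2)"
  define C where "C = integral\<^sup>L lborel (\<lambda>x. \<bar>vb x\<bar> powr (1 + r) * indicator {0<..<1} x)"
  have iw2: "integrable lborel (\<lambda>x. (wt x)\<^sup>2)"
  proof -
    have "integrable lborel (\<lambda>x. indicator {0<..<1} x *\<^sub>R (v_y x)\<^sup>2)"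
      using L2w unfolding L2_01_def set_integrable_def by simp
    moreover have "(\<lambda>x. indicator {0<..<1} x *\<^sub>R (v_y x)\<^sup>2) = (\<lambda>x. (wt x)\<^sup>2)"
      by (auto simp: wt_def indicator_def power2_eq_square)
    ultimately show ?thesis by simp
  qed
  have vbr_cont: "isCont (\<lambda>x. \<bar>vb x\<bar> powr (1 + r)) x" for x
    using u_cont[OF vbc, of "1 + r"] assms(1) by simp
  have iC: "integrable lborel (\<lambda>x. \<bar>vb x\<bar> powr (1 + r) * indicator {0<..<1} x)"
  proof -
    have "integrable lborel (\<lambda>x. \<bar>vb x\<bar> powr (1 + r) * indicator {0..1} x)"
      by (rule borel_integrable_atLeastAtMost) (rule vbr_cont)
    then have "integrable lborel (\<lambda>x. \<bar>vb x\<bar> powr (1 + r) * indicator {0..1} x * indicator {0<..<1} x)"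
      by (rule integrable_real_mult_indicator[rotated]) simp
    moreover have "(\<lambda>x. \<bar>vb x\<bar> powr (1 + r) * indicator {0..1} x * indicator {0<..<1} x) =
        (\<lambda>x. \<bar>vb x\<bar> powr (1 + r) * indicator {0<..<1} x)"
      by (auto simp: indicator_def)
    ultimately show ?thesis by simp
  qed
  have iQ: "integrable lborel (\<lambda>\<xi>. \<bar>vb \<xi>\<bar> powr p * \<bar>wt \<xi>\<bar>)"
  proof (rule int_cw'[OF wi u_cont[OF vbc p0]])
    fix x show "\<bar>\<bar>vb x\<bar> powr p\<bar> \<le> M powr p" using M[of x] p0 by (auto intro!: powr_mono2)
  qed
  have amgm: "\<bar>vb \<xi>\<bar> powr p * \<bar>wt \<xi>\<bar> \<le> \<epsilon> * (wt \<xi>)\<^sup>2 + (1 / (4 * \<epsilon>)) * (\<bar>vb \<xi>\<bar> powr (1 + r) * indicator {0<..<1} \<xi>)"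
    for \<xi>
  proof (cases "\<xi> \<in> {0<..<1}")
    case True
    define a where "a = \<bar>vb \<xi>\<bar> powr p"
    define b where "b = \<bar>wt \<xi>\<bar>"
    have a2: "a\<^sup>2 = \<bar>vb \<xi>\<bar> powr (1 + r)"
      unfolding a_def p_def by (simp add: powr_powr[symmetric] power2_eq_square powr_add[symmetric])
    have "0 \<le> (2 * \<epsilon> * b - a)\<^sup>2" by simp
    then have "4 * \<epsilon> * (a * b) \<le> 4 * \<epsilon> * (\<epsilon> * b\<^sup>2 + (1 / (4 * \<epsilon>)) * a\<^sup>2)"
      using assms(4) by (simp add: power2_eq_square algebra_simps)
    then have "a * b \<le> \<epsilon> * b\<^sup>2 + (1 / (4 * \<epsilon>)) * a\<^sup>2"
      using assms(4) by (simp add: mult_le_cancel_left_pos)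
    then show ?thesis using True a2 by (simp add: a_def b_def)
  next
    case False
    then show ?thesis using assms(4) by (simp add: wt0)
  qed
  have QB: "Q \<le> \<epsilon> * B2 + (1 / (4 * \<epsilon>)) * C"
  proof -
    have "Q \<le> integral\<^sup>L lborel (\<lambda>\<xi>. \<epsilon> * (wt \<xi>)\<^sup>2 + (1 / (4 * \<epsilon>)) * (\<bar>vb \<xi>\<bar> powr (1 + r) * indicator {0<..<1} \<xi>))"
      unfolding Q_def by (rule integral_mono[OF iQ _ amgm]) (use iw2 iC in simp)
    also have "\<dots> = \<epsilon> * B2 + (1 / (4 * \<epsilon>)) * C"
      unfolding B2_def C_def using iw2 iC by simp
    finally show ?thesis .
  qed
  define R where "R = (3 + r) * \<epsilon> / 2 * (L2norm01 v_y)\<^sup>2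
              + (3 + r) / (8 * \<epsilon>) * (Lpnorm01 (1 + r) v) powr (1 + r)"
  have B2eq: "(L2norm01 v_y)\<^sup>2 = B2"
  proof -
    have "(LINT x:{0<..<1}|lborel. (v_y x)\<^sup>2) = B2"
      unfolding set_lebesgue_integral_def B2_def wt_def
      by (rule Bochner_Integration.integral_cong[OF refl]) (auto simp: indicator_def)
    moreover have "0 \<le> B2" unfolding B2_def by simp
    ultimately show ?thesis by (simp add: L2norm01_def)
  qed
  have Ceq: "(Lpnorm01 (1 + r) v) powr (1 + r) = C"
  proof -
    have "(LINT x:{0<..<1}|lborel. \<bar>v x\<bar> powr (1 + r)) = C"
      unfolding set_lebesgue_integral_def C_def
      by (rule Bochner_Integration.integral_cong[OF refl]) (auto simp: indicator_def vbv)
    moreover have "0 \<le> C" unfolding C_def by simp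
    ultimately show ?thesis using assms(1) by (simp add: Lpnorm01_def powr_powr)
  qed
  have Req: "R = (p + 1) * (\<epsilon> * B2 + (1 / (4 * \<epsilon>)) * C)"
    unfolding R_def B2eq Ceq p_def using assms(4) by (simp add: field_simps)
  have vx: "\<bar>v x\<bar> powr (p + 1) \<le> R" if "0 < x" "x < 1" for x
  proof -
    have "\<bar>v x\<bar> powr (p + 1) \<le> (p + 1) * Q" using chain[OF that] that by (simp add: vbv)
    also have "\<dots> \<le> R" unfolding Req using QB p0 by (intro mult_left_mono) auto
    finally show ?thesis .
  qed
  have "\<bar>v (1/2)\<bar> powr (p + 1) \<le> R" by (rule vx) simp_all
  then have R0: "0 \<le> R" by (meson order_trans powr_ge_zero)
  define q where "q = p + 1"
  have q0: "0 < q" using p0 by (simp add: q_def)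
  have "(3 + r) / 2 = q" by (simp add: q_def p_def field_simps)
  define S where "S = (LINT x:{0<..<1}|lborel. (v x)\<^sup>2)"
  have S0: "0 \<le> S" unfolding S_def set_lebesgue_integral_def by simp
  have Sle: "S \<le> R powr (2 / q)"
  proof -
    have "S = integral\<^sup>L lborel (\<lambda>x. (v x)\<^sup>2 * indicator {0<..<1} x)"
      unfolding S_def set_lebesgue_integral_def by (simp add: mult.commute)
    also have "\<dots> \<le> integral\<^sup>L lborel (\<lambda>x. R powr (2 / q) * indicator {0<..<1::real} x)"
    proof (rule Bochner_Integration.integral_mono)
      show "integrable lborel (\<lambda>x. (v x)\<^sup>2 * indicator {0<..<1} x)"
        using L2v unfolding L2_01_def set_integrable_def by (simp add: mult.commute)
      show "integrable lborel (\<lambda>x. R powr (2 / q) * indicator {0<..<1::real} x)"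
        by (intro integrable_mult_right integrable_real_indicator) auto
      fix x
      show "(v x)\<^sup>2 * indicator {0<..<1} x \<le> R powr (2 / q) * indicator {0<..<1} x"
      proof (cases "0 < x \<and> x < 1")
        case True
        have "(v x)\<^sup>2 = (\<bar>v x\<bar> powr q) powr (2 / q)"
          using q0 by (simp add: powr_powr)
        also have "\<dots> \<le> R powr (2 / q)"
          using vx[of x] True q0 by (intro powr_mono2) (auto simp: q_def)
        finally show ?thesis using True by simp
      qed simp
    qed
    also have "\<dots> = R powr (2 / q)" by simp
    finally show ?thesis .
  qed
  have "L2norm01 v = S powr (1 / 2)" using S0 by (simp add: L2norm01_def S_def powr_half_sqrt)
  then have "L2norm01 v powr q = S powr (q / 2)" using S0 by (simp add: powr_powr)
  also have "\<dots> \<le> (R powr (2 / q)) powr (q / 2)" using S0 Sle q0 by (intro powr_mono2) auto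
  also have "\<dots> = R" using R0 q0 by (simp add: powr_powr)
  finally show ?thesis using \<open>(3 + r) / 2 = q\<close> by (simp add: R_def)
qed


end
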